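(* Let $K_1=\overline{1}$ and, for $j\ge1$, let $K_{j+1}$ be the periodic sequence whose repeating block is obtained by writing the repeating block of $K_j$ twice and replacing the last symbol by its complement. For $s=s_1s_2\dots\in\{0,1\}^{\mathbb N}$ let $\tau(s)=\sum_{k\ge1}t_k2^{-k}$ with $t_k=\sum_{i=1}^k s_i\pmod 2$, and put $\tau_j=\tau(K_j)$. Then for every $j\ge1$, $$\tau_j=\frac{p_j}{q_j},\qquad q_j=2^{2^{j-1}}+1,\qquad p_j=2^{2^{j-1}}+1-\prod_{k=0}^{j-2}\bigl(2^{2^k}-1\bigr),$$ this fraction is in lowest terms, and equivalently $$\tau_j=1-\frac{\prod_{k=0}^{j-2}(2^{2^k}-1)}{2^{2^{j-1}}+1}=1-\frac{\prod_{k=0}^{j-1}(1-2^{-2^k})}{2(1-2^{-2^j})}.$$ Moreover $p_1=2,q_1=3$ and $p_{j+1}=2+(2^{2^{j-1}}-1)p_j$, $q_{j+1}=2+(2^{2^{j-1}}-1)q_j$ for $j\ge1$.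
   Context: The empty product equals $1$. For example $\tau_1=2/3$, $\tau_2=4/5$, $\tau_3=14/17$, $\tau_4=212/257$. *)

theory Defs
  imports Complex_Main
begin

text \<open>Repeating block of K_j (as a list of 0/1 naturals). blk 0 is unused
  (we set it equal to blk 1); blk 1 = [1]; blk (j+1) = b @ butlast b @ [1 - last b].\<close>
fun blk :: "nat \<Rightarrow> nat list" where
  "blk 0 = [1]"
| "blk (Suc 0) = [1]"
| "blk (Suc (Suc j)) = (let b = blk (Suc j) in b @ butlast b @ [1 - last b])"

text \<open>K_j as a 0-indexed sequence: K j k is the symbol s_(k+1).\<close>
definition K :: "nat \<Rightarrow> nat \<Rightarrow> nat" where
  "K j k = blk j ! (k mod length (blk j))"

text \<open>tau(s) = sum_(k>=1) t_k 2^(-k), t_k = (s_1+...+s_k) mod 2; with 0-indexed s,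
  t_(n+1) = (sum_(i<=n) s i) mod 2.\<close>
definition tau :: "(nat \<Rightarrow> nat) \<Rightarrow> real" where
  "tau s = (\<Sum>n. real ((\<Sum>i\<le>n. s i) mod 2) / 2 ^ (Suc n))"

definition qq :: "nat \<Rightarrow> int" where
  "qq j = 2 ^ (2 ^ (j - 1)) + 1"

definition pp :: "nat \<Rightarrow> int" where
  "pp j = 2 ^ (2 ^ (j - 1)) + 1 - (\<Prod>k<j - 1. (2 ^ (2 ^ k) - 1))"

end

theory Submission imports Defs begin

lemma tau_periodic:
  fixes s :: "nat \<Rightarrow> nat" and L :: nat
  assumes per: "\<And>n. s (n + L) = s n" and odd: "odd (\<Sum>i<L. s i)"
  shows "tau s = ((\<Sum>n<L. real ((\<Sum>i\<le>n. s i) mod 2) / 2^Suc n) + 1/2^L) / (1 + 1/2^L)"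
proof -
  define t where "t n = (\<Sum>i\<le>n. s i) mod 2" for n
  have t01: "t n \<le> 1" for n unfolding t_def by simp
  have sumL: "(\<Sum>i\<le>n+L. s i) = (\<Sum>i<L. s i) + (\<Sum>i\<le>n. s i)" for n
  proof (induction n)
    case 0
    then show ?case using per[of 0] by (simp add: lessThan_Suc_atMost[symmetric])
  next
    case (Suc n)
    then show ?case using per[of "Suc n"] by simp
  qed
  have tL: "t (n+L) = 1 - t n" for n
  proof -
    have h: "odd a \<Longrightarrow> (a + b) mod 2 = 1 - b mod 2" for a b :: nat by presburger
    show ?thesis unfolding t_def sumL using h[OF odd] .
  qed
  define f where "f n = real (t n) / 2^Suc n" for n
  have fnn: "0 \<le> f n" for n unfolding f_def by simp
  have fle: "f n \<le> (1/2)^Suc n" for n unfolding f_def using t01[of n]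
    by (simp add: power_divide divide_right_mono)
  have sf: "summable f"
    by (rule summable_comparison_test[of _ "\<lambda>n. (1/2::real)^Suc n"])
       (use fnn fle power_half_series in \<open>auto simp: sums_iff\<close>)
  have fL: "f (n+L) = (1/2^L) * ((1/2)^Suc n - f n)" for n
    using tL[of n] t01[of n] unfolding f_def
    by (simp add: of_nat_diff power_add field_simps)
  have "(\<lambda>n. f (n+L)) sums ((1/2^L) * (1 - suminf f))"
    unfolding fL
    by (intro sums_mult sums_diff power_half_series summable_sums sf)
  hence e1: "(\<Sum>n. f (n+L)) = (1/2^L) * (1 - suminf f)" by (simp add: sums_iff)
  have "suminf f = (\<Sum>n. f (n+L)) + (\<Sum>n<L. f n)"
    by (rule suminf_split_initial_segment[OF sf])
  hence e2: "suminf f = (1/2^L) * (1 - suminf f) + (\<Sum>n<L. f n)" using e1 by simp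
  have ts: "tau s = suminf f" unfolding tau_def f_def t_def by simp
  have "(1 + 1/2^L) * suminf f = (\<Sum>n<L. f n) + 1/2^L" using e2 by (simp add: field_simps)
  moreover have "(1 + 1/2^L :: real) \<noteq> 0" by (metis add_pos_pos zero_less_one zero_less_divide_iff zero_less_numeral zero_less_power less_irrefl)
  ultimately have "suminf f = ((\<Sum>n<L. f n) + 1/2^L) / (1 + 1/2^L)"
    by (simp add: eq_divide_eq mult.commute)
  thus ?thesis unfolding ts unfolding f_def t_def .
qed

lemma blk_props:
  "length (blk (Suc m)) = 2^m \<and> set (blk (Suc m)) \<subseteq> {0,1} \<and> odd (sum_list (blk (Suc m)))"
proof (induction m)
  case 0
  then show ?case by simp
next
  case (Suc m)
  define b where "b = blk (Suc m)"
  have lb: "length b = 2^m" "set b \<subseteq> {0,1}" using Suc b_def by auto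
  have ne: "b \<noteq> []" using lb by auto
  have bb: "blk (Suc (Suc m)) = b @ butlast b @ [1 - last b]" by (simp add: b_def Let_def)
  have lastin: "last b \<in> {0,1}" using lb(2) ne last_in_set by blast
  have sb: "sum_list b = sum_list (butlast b) + last b"
    using ne by (metis append_butlast_last_id sum_list_append sum_list_simps add_0_right)
  have "length (blk (Suc (Suc m))) = 2^Suc m" using lb ne unfolding bb by simp
  moreover have "set (blk (Suc (Suc m))) \<subseteq> {0,1}" using lb lastin unfolding bb
    by (auto dest: in_set_butlastD)
  moreover have "odd (sum_list (blk (Suc (Suc m))))"
  proof -
    have "sum_list (blk (Suc (Suc m))) = 2 * sum_list (butlast b) + 1"
      unfolding bb using sb lastin by (cases "last b = 0") simp_all
    then show ?thesis by simp
  qed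
  ultimately show ?case by simp
qed

lemma K_per: "K j (n + length (blk j)) = K j n"
  unfolding K_def by simp

lemma K_sum: "(\<Sum>i<2^m. K (Suc m) i) = sum_list (blk (Suc m))"
  using blk_props[of m] unfolding K_def
  by (simp add: sum_list_sum_nth atLeast0LessThan)

lemma K_next:
  assumes "i < 2 * 2^m - 1"
  shows "K (Suc (Suc m)) i = K (Suc m) i"
proof -
  define b where "b = blk (Suc m)"
  have lb: "length b = 2^m" using blk_props[of m] b_def by simp
  have ne: "b \<noteq> []" using lb by auto
  have bb: "blk (Suc (Suc m)) = b @ butlast b @ [1 - last b]" by (simp add: b_def Let_def)
  have l2: "length (blk (Suc (Suc m))) = 2 * 2^m" using blk_props[of "Suc m"] by simp
  show ?thesis
  proof (cases "i < 2^m")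
    case True
    then show ?thesis unfolding K_def l2 b_def[symmetric] using assms lb bb
      by (simp add: nth_append)
  next
    case False
    then have "i mod 2^m = i - 2^m" using assms by (simp add: le_mod_geq)
    moreover have "i - 2^m < length (butlast b)" using assms False lb by simp
    ultimately show ?thesis unfolding K_def l2 b_def[symmetric] using assms lb bb False
      by (simp add: nth_append nth_butlast)
  qed
qed

definition tt :: "nat \<Rightarrow> nat \<Rightarrow> nat" where
  "tt j n = (\<Sum>i\<le>n. K j i) mod 2"

definition AA :: "nat \<Rightarrow> real" where
  "AA m = (\<Sum>n<2^m. real (tt (Suc m) n) / 2^Suc n)"

lemma tau_K: "tau (K (Suc m)) = (AA m + 1/2^(2^m)) / (1 + 1/2^(2^m))"
  unfolding AA_def tt_def
  by (rule tau_periodic) (use K_per[of "Suc m"] blk_props[of m] K_sum[of m] in auto)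

lemma tt_shift: "tt (Suc m) (n + 2^m) = 1 - tt (Suc m) n"
proof -
  have sumL: "(\<Sum>i\<le>n+2^m. K (Suc m) i) = (\<Sum>i<2^m. K (Suc m) i) + (\<Sum>i\<le>n. K (Suc m) i)" for n
  proof (induction n)
    case 0
    then show ?case using K_per[of "Suc m" 0] blk_props[of m] by (simp add: lessThan_Suc_atMost[symmetric])
  next
    case (Suc n)
    then show ?case using K_per[of "Suc m" "Suc n"] blk_props[of m] by simp
  qed
  have h: "odd a \<Longrightarrow> (a + b) mod 2 = 1 - b mod 2" for a b :: nat by presburger
  show ?thesis unfolding tt_def sumL K_sum using h blk_props[of m] by blast
qed

lemma tt_next: "n < 2 * 2^m - 1 \<Longrightarrow> tt (Suc (Suc m)) n = tt (Suc m) n"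
  unfolding tt_def using K_next by (intro arg_cong[where f="\<lambda>x. x mod 2"] sum.cong) auto

lemma tt_last_next: "tt (Suc (Suc m)) (2 * 2^m - 1) = 1"
proof -
  have pos: "0 < (2::nat)^m" by simp
  have "Suc (2*2^m - 1) = 2*(2::nat)^m" by simp
  have "Suc (2*2^m - 1) = 2^Suc m" by simp
  moreover have "{..2*2^m - 1} = {..<Suc (2*2^m - 1)}" by (rule lessThan_Suc_atMost[symmetric])
  ultimately have "(\<Sum>i\<le>2 * 2^m - 1. K (Suc (Suc m)) i) = (\<Sum>i<2^Suc m. K (Suc (Suc m)) i)"
    by (simp only:)
  moreover have "odd (\<Sum>i<2^Suc m. K (Suc (Suc m)) i)"
    using K_sum[of "Suc m"] blk_props[of "Suc m"] by (simp del: blk.simps)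
  ultimately show ?thesis unfolding tt_def by (simp add: odd_iff_mod_2_eq_one del: blk.simps)
qed

lemma tt_last: "tt (Suc m) (2 * 2^m - 1) = 0"
proof -
  have "tt (Suc m) (2 * 2^m - 1) = 1 - tt (Suc m) (2^m - 1)"
    using tt_shift[of m "2^m - 1"] by (simp add: mult_2)
  moreover have "(\<Sum>i\<le>2^m - 1. K (Suc m) i) = (\<Sum>i<2^m. K (Suc m) i)"
  proof -
    have "Suc (2^m - 1) = (2::nat)^m" by simp
    moreover have "{..2^m - 1} = {..<Suc (2^m - 1)}" by (rule lessThan_Suc_atMost[symmetric])
    ultimately show ?thesis by (simp only:)
  qed
  ultimately show ?thesis unfolding tt_def using K_sum[of m] blk_props[of m]
    by (simp add: odd_iff_mod_2_eq_one)
qed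

lemma geo_sum: "(\<Sum>n<L. 1/2^Suc n :: real) = 1 - 1/2^L"
  by (induction L) (simp_all add: field_simps)

lemma sum_split_add: "(\<Sum>n<L+k. f n) = (\<Sum>n<L. f n) + (\<Sum>n<k. f (L+n))"
  for f :: "nat \<Rightarrow> real"
  by (induction k) simp_all

lemma AA_rec: "AA (Suc m) = AA m * (1 - 1/2^(2^m)) + 1/2^(2^m)"
proof -
  define L :: nat where "L = 2^m"
  define g where "g n = real (tt (Suc m) n) / 2^Suc n" for n
  define h where "h n = real (tt (Suc (Suc m)) n) / 2^Suc n" for n
  have Lpos: "0 < L" unfolding L_def by simp
  have e0: "2^Suc m = Suc (2*L - 1)" using Lpos unfolding L_def by simp
  have "AA (Suc m) = (\<Sum>n<Suc (2*L-1). h n)" unfolding AA_def h_def e0 ..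
  also have "\<dots> = (\<Sum>n<2*L-1. h n) + h (2*L-1)" by simp
  also have "h (2*L-1) = 1/2^(2*L)"
    unfolding h_def L_def using tt_last_next[of m] Lpos L_def by (simp add: Suc_diff_1)
  also have "(\<Sum>n<2*L-1. h n) = (\<Sum>n<2*L-1. g n)"
    unfolding h_def g_def L_def using tt_next[of _ m] by (intro sum.cong) auto
  also have "\<dots> = (\<Sum>n<2*L-1. g n) + g (2*L-1)"
    unfolding g_def L_def using tt_last[of m] by simp
  also have "\<dots> = (\<Sum>n<L+L. g n)"
  proof -
    have LL: "L + L = Suc (2*L - 1)" using Lpos by simp
    show ?thesis by (simp only: LL sum.lessThan_Suc)
  qed
  also have "\<dots> = (\<Sum>n<L. g n) + (\<Sum>n<L. g (L+n))" by (rule sum_split_add)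
  also have "(\<Sum>n<L. g (L+n)) = (\<Sum>n<L. (1/2^L) * (1/2^Suc n - g n))"
  proof (rule sum.cong)
    fix n assume "n \<in> {..<L}"
    have "tt (Suc m) (L + n) = 1 - tt (Suc m) n" using tt_shift[of m n] L_def by (simp add: add.commute)
    moreover have "tt (Suc m) n \<le> 1" unfolding tt_def by simp
    ultimately show "g (L+n) = (1/2^L) * (1/2^Suc n - g n)"
      unfolding g_def by (simp add: of_nat_diff power_add field_simps)
  qed simp
  also have "\<dots> = (1/2^L) * ((\<Sum>n<L. 1/2^Suc n) - (\<Sum>n<L. g n))"
    by (simp only: sum_distrib_left[symmetric] sum_subtractf)
  also have "(\<Sum>n<L. g n) = AA m" unfolding AA_def g_def L_def ..
  finally have eq: "AA (Suc m) = AA m + 1/2^L * ((\<Sum>n<L. 1/2^Suc n) - AA m) + 1/2^(2*L)" .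
  define N :: real where "N = 2^L"
  have Npos: "N > 0" unfolding N_def by simp
  have eq2: "AA (Suc m) = AA m + 1/N * ((1 - 1/N) - AA m) + 1/(N*N)"
    using eq unfolding geo_sum N_def by (simp add: mult_2 power_add)
  show ?thesis unfolding L_def[symmetric] N_def[symmetric] eq2 using Npos
    by (simp add: field_simps)
qed

lemma AA_closed: "AA m = 1 - (\<Prod>k<m. (2^(2^k) - 1 :: real)) / 2^(2^m)"
proof (induction m)
  case 0
  then show ?case by (simp add: AA_def tt_def K_def)
next
  case (Suc m)
  have p: "(2::real)^(2^Suc m) = 2^(2^m) * 2^(2^m)" by (simp add: mult_2 power_add)
  show ?case unfolding AA_rec Suc p by (simp add: field_simps)
qed

lemma Q_closed: "(\<Prod>k<m. (1 - 1 / 2 ^ (2 ^ k) :: real)) = 2 * (\<Prod>k<m. (2^(2^k) - 1 :: real)) / 2^(2^m)"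
proof (induction m)
  case 0
  then show ?case by simp
next
  case (Suc m)
  define N :: real where "N = 2^(2^m)"
  have Npos: "N > 0" unfolding N_def by simp
  have p: "(2::real)^(2^Suc m) = N * N" unfolding N_def by (simp add: mult_2 power_add)
  show ?case unfolding prod.lessThan_Suc Suc p N_def[symmetric] using Npos
    by (simp add: field_simps)
qed

lemma factor_dvd: "k < m \<Longrightarrow> (2^(2^k) - 1 :: int) dvd (2^(2^m) - 1)"
proof -
  assume "k < m"
  then have "(2::int)^(2^m) = (2^(2^k))^(2^(m-k))"
    by (simp add: power_mult[symmetric] power_add[symmetric] le_add_diff_inverse)
  then show ?thesis using power_diff_1_eq[of "(2::int)^(2^k)" "2^(m-k)"] by simp
qed

lemma coprime_pm: "coprime ((2::int)^(2^m) - 1) (2^(2^m) + 1)"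
proof -
  define x :: int where "x = 2^(2^m) - 1"
  have "odd x" unfolding x_def by simp
  then have "coprime x 2" by simp
  then have "coprime x (x + 2)" using gcd_add2[of x 2] by (simp add: coprime_iff_gcd_eq_1)
  moreover have "x + 2 = 2^(2^m) + 1" unfolding x_def by simp
  ultimately show ?thesis unfolding x_def by simp
qed

lemma coprime_main: "coprime ((2::int)^(2^m) + 1 - (\<Prod>k<m. (2^(2^k) - 1))) (2^(2^m) + 1)"
proof -
  define b :: int where "b = 2^(2^m) + 1"
  define P :: int where "P = (\<Prod>k<m. (2^(2^k) - 1))"
  have "coprime P b" unfolding P_def
  proof (rule prod_coprime_left)
    fix k assume "k \<in> {..<m}"
    then show "coprime ((2::int)^(2^k) - 1) b"
      using coprime_divisors[OF factor_dvd[of k m] dvd_refl coprime_pm[of m]] b_def by simp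
  qed
  then have "coprime (b - P) b"
    by (metis gcd_diff2 is_unit_gcd)
  then show ?thesis unfolding b_def P_def .
qed

lemma divdiv: "(c::real) \<noteq> 0 \<Longrightarrow> (x/c)/(y/c) = x/y"
  by (cases "y = 0") (simp_all add: field_simps)
lemma alg1: "(N::real) > 0 \<Longrightarrow> N \<noteq> 1 \<Longrightarrow> (2*(P*(N-1))/(N*N)) / (2*(1-1/(N*N))) = P/(N+1)"
proof -
  assume a: "N > 0" "N \<noteq> 1"
  have "1 - 1/(N*N) = (N-1)*(N+1)/(N*N)" using a by (simp add: field_simps)
  then have "(2*(P*(N-1))/(N*N)) / (2*(1-1/(N*N))) = (2*(P*(N-1))/(N*N)) / (2*((N-1)*(N+1)/(N*N)))" by simp
  also have "\<dots> = (2*(P*(N-1))/(N*N)) / ((2*((N-1)*(N+1)))/(N*N))" by simp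
  also have "\<dots> = (2*(P*(N-1))) / (2*((N-1)*(N+1)))" using a by (intro divdiv) simp
  also have "\<dots> = ((2*(N-1)) * P) / ((2*(N-1))*(N+1))" by (simp only: mult_ac)
  also have "\<dots> = P/(N+1)" using a by (intro mult_divide_mult_cancel_left) simp
  finally show ?thesis .
qed
lemma alg2: "(N::real) > 0 \<Longrightarrow> ((1 - P/N) + 1/N) / (1 + 1/N) = 1 - P / (N + 1)"
proof -
  assume a: "N > 0"
  have b: "N + 1 \<noteq> 0" using a by simp
  have "((1 - P/N) + 1/N) / (1 + 1/N) = ((N + 1 - P)/N) / ((N+1)/N)" using a by (simp add: field_simps)
  also have "\<dots> = (N + 1 - P)/(N+1)" using a by simp
  also have "\<dots> = 1 - P/(N+1)" using b by (simp add: diff_divide_distrib)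
  finally show ?thesis .
qed

lemma tau_closed:
  "tau (K (Suc m)) = 1 - real_of_int (\<Prod>k<m. (2 ^ (2 ^ k) - 1 :: int)) / (2 ^ (2 ^ m) + 1)"
proof -
  define N :: real where "N = 2^(2^m)"
  define P :: real where "P = (\<Prod>k<m. (2^(2^k) - 1 :: real))"
  have Npos: "N > 0" unfolding N_def by simp
  have PP: "real_of_int (\<Prod>k<m. (2 ^ (2 ^ k) - 1 :: int)) = P" unfolding P_def by simp
  have "tau (K (Suc m)) = ((1 - P/N) + 1/N) / (1 + 1/N)"
    unfolding tau_K AA_closed P_def[symmetric] N_def[symmetric] ..
  also have "\<dots> = 1 - P / (N + 1)" using Npos by (rule alg2)
  finally show ?thesis unfolding PP N_def .
qed

theorem mainTheorem5:
  shows "(\<forall>j\<ge>1.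
            tau (K j) = real_of_int (pp j) / real_of_int (qq j)
          \<and> coprime (pp j) (qq j)
          \<and> tau (K j) = 1 - real_of_int (\<Prod>k<j - 1. (2 ^ (2 ^ k) - 1 :: int)) / (2 ^ (2 ^ (j - 1)) + 1)
          \<and> tau (K j) = 1 - (\<Prod>k<j. (1 - 1 / 2 ^ (2 ^ k) :: real)) / (2 * (1 - 1 / 2 ^ (2 ^ j))))
        \<and> pp 1 = 2 \<and> qq 1 = 3
        \<and> (\<forall>j\<ge>1. pp (j + 1) = 2 + (2 ^ (2 ^ (j - 1)) - 1) * pp j
                \<and> qq (j + 1) = 2 + (2 ^ (2 ^ (j - 1)) - 1) * qq j)"
proof (intro conjI allI impI)
  fix j :: nat assume "j \<ge> 1"
  then obtain m where j: "j = Suc m" by (cases j) auto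
  define N :: real where "N = 2^(2^m)"
  define P :: real where "P = (\<Prod>k<m. (2^(2^k) - 1 :: real))"
  have Npos: "N > 0" unfolding N_def by simp
  have PP: "real_of_int (\<Prod>k<m. (2 ^ (2 ^ k) - 1 :: int)) = P" unfolding P_def by simp
  have tc: "tau (K j) = 1 - P / (N + 1)" using tau_closed[of m] unfolding j PP N_def by simp
  show "tau (K j) = 1 - real_of_int (\<Prod>k<j - 1. (2 ^ (2 ^ k) - 1 :: int)) / (2 ^ (2 ^ (j - 1)) + 1)"
    using tau_closed[of m] j by simp
  show "coprime (pp j) (qq j)" unfolding pp_def qq_def j using coprime_main[of m] by simp
  have "real_of_int (pp j) / real_of_int (qq j) = (N + 1 - P) / (N + 1)"
    unfolding pp_def qq_def j PP[symmetric] N_def by simp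
  also have "\<dots> = 1 - P / (N + 1)" using Npos by (simp add: diff_divide_distrib)
  finally show "tau (K j) = real_of_int (pp j) / real_of_int (qq j)" using tc by simp
  have p: "(2::real)^(2^Suc m) = N * N" unfolding N_def by (simp add: mult_2 power_add)
  have Q: "(\<Prod>k<j. (1 - 1 / 2 ^ (2 ^ k) :: real)) = 2 * (P * (N - 1)) / (N * N)"
    unfolding j Q_closed p prod.lessThan_Suc P_def[symmetric] N_def[symmetric] by simp
  have "1 - (\<Prod>k<j. (1 - 1 / 2 ^ (2 ^ k) :: real)) / (2 * (1 - 1 / 2 ^ (2 ^ j)))
        = 1 - (2 * (P * (N - 1)) / (N * N)) / (2 * (1 - 1 / (N * N)))"
    unfolding Q unfolding j p ..
  also have "\<dots> = 1 - P / (N + 1)"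
  proof -
    have "(2::real)^(2^m) \<ge> 2^1" by (rule power_increasing) auto
    then have N1: "N - 1 \<noteq> 0" unfolding N_def by simp
    show ?thesis using alg1[OF Npos] N1 by simp
  qed
  finally show "tau (K j) = 1 - (\<Prod>k<j. (1 - 1 / 2 ^ (2 ^ k) :: real)) / (2 * (1 - 1 / 2 ^ (2 ^ j)))"
    using tc by simp
next
  show "pp 1 = 2" unfolding pp_def by simp
  show "qq 1 = 3" unfolding qq_def by simp
next
  fix j :: nat assume "j \<ge> 1"
  then obtain m where j: "j = Suc m" by (cases j) auto
  define N :: int where "N = 2^(2^m)"
  define P :: int where "P = (\<Prod>k<m. (2^(2^k) - 1))"
  have e1: "pp (j + 1) = N * N + 1 - P * (N - 1)"
    unfolding pp_def j P_def N_def by (simp add: mult_2 power_add)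
  have e2: "pp j = N + 1 - P" unfolding pp_def j P_def N_def by simp
  have e3: "qq (j + 1) = N * N + 1" unfolding qq_def j N_def by (simp add: mult_2 power_add)
  have e4: "qq j = N + 1" unfolding qq_def j N_def by simp
  have e5: "(2::int) ^ (2 ^ (j - 1)) = N" unfolding j N_def by simp
  show "pp (j + 1) = 2 + (2 ^ (2 ^ (j - 1)) - 1) * pp j"
    unfolding e1 e2 e5 by (simp add: algebra_simps)
  show "qq (j + 1) = 2 + (2 ^ (2 ^ (j - 1)) - 1) * qq j"
    unfolding e3 e4 e5 by (simp add: algebra_simps)
qed

end
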